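(* Let $R$ be a ring and $M$ a right $R$-module such that the ring $\operatorname{End}_R(M)$ has no factor ring isomorphic to $\mathbb{F}_2$. Then $\operatorname{End}_R(E(M))$ also has no factor ring isomorphic to $\mathbb{F}_2$, where $E(M)$ denotes the injective hull of $M$.
   Context: All rings are associative with identity; modules are unital right modules. $\mathbb{F}_2$ is the field with two elements. A ring $T$ "has a factor isomorphic to $\mathbb{F}_2$" if there is a two-sided ideal $I$ of $T$ with $T/I\cong \mathbb{F}_2$, equivalently if there exists a unital ring homomorphism $T\to\mathbb{F}_2$. *)

theory Defs
  imports "HOL-Algebra.Algebra"
begin

text \<open>A right module over R: an abelian group (additive part of a ring record)
  together with a right scalar action.\<close>
record ('a, 'b) rmodule = "'b ring" +
  rsmult :: "'b \<Rightarrow> 'a \<Rightarrow> 'b"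

definition right_module :: "('a, 'c) ring_scheme \<Rightarrow> ('a, 'b, 'd) rmodule_scheme \<Rightarrow> bool" where
  "right_module R M \<longleftrightarrow> ring R \<and> abelian_group M \<and>
     (\<forall>x\<in>carrier M. \<forall>r\<in>carrier R. rsmult M x r \<in> carrier M) \<and>
     (\<forall>x\<in>carrier M. \<forall>y\<in>carrier M. \<forall>r\<in>carrier R.
        rsmult M (x \<oplus>\<^bsub>M\<^esub> y) r = rsmult M x r \<oplus>\<^bsub>M\<^esub> rsmult M y r) \<and>
     (\<forall>x\<in>carrier M. \<forall>r\<in>carrier R. \<forall>s\<in>carrier R.
        rsmult M x (r \<oplus>\<^bsub>R\<^esub> s) = rsmult M x r \<oplus>\<^bsub>M\<^esub> rsmult M x s) \<and>
     (\<forall>x\<in>carrier M. \<forall>r\<in>carrier R. \<forall>s\<in>carrier R.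
        rsmult M x (r \<otimes>\<^bsub>R\<^esub> s) = rsmult M (rsmult M x r) s) \<and>
     (\<forall>x\<in>carrier M. rsmult M x \<one>\<^bsub>R\<^esub> = x)"

definition rmod_hom ::
  "('a, 'c) ring_scheme \<Rightarrow> ('a, 'b, 'd) rmodule_scheme \<Rightarrow> ('a, 'e, 'f) rmodule_scheme
     \<Rightarrow> ('b \<Rightarrow> 'e) set" where
  "rmod_hom R M N = {f. f \<in> carrier M \<rightarrow>\<^sub>E carrier N \<and>
     (\<forall>x\<in>carrier M. \<forall>y\<in>carrier M. f (x \<oplus>\<^bsub>M\<^esub> y) = f x \<oplus>\<^bsub>N\<^esub> f y) \<and>
     (\<forall>x\<in>carrier M. \<forall>r\<in>carrier R. f (rsmult M x r) = rsmult N (f x) r)}"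

definition End_ring ::
  "('a, 'c) ring_scheme \<Rightarrow> ('a, 'b, 'd) rmodule_scheme \<Rightarrow> ('b \<Rightarrow> 'b) ring" where
  "End_ring R M =
     \<lparr> carrier = rmod_hom R M M,
       monoid.mult = (\<lambda>f g. \<lambda>x\<in>carrier M. f (g x)),
       one = (\<lambda>x\<in>carrier M. x),
       ring.zero = (\<lambda>x\<in>carrier M. \<zero>\<^bsub>M\<^esub>),
       ring.add = (\<lambda>f g. \<lambda>x\<in>carrier M. f x \<oplus>\<^bsub>M\<^esub> g x) \<rparr>"

definition F2 :: "int set ring" where
  "F2 = ZFact 2"

definition has_F2_factor :: "('b, 'c) ring_scheme \<Rightarrow> bool" where
  "has_F2_factor T \<longleftrightarrow> (\<exists>I. ideal I T \<and> (T Quot I) \<simeq> F2)"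

definition rsubmodule ::
  "('a, 'c) ring_scheme \<Rightarrow> ('a, 'b, 'd) rmodule_scheme \<Rightarrow> 'b set \<Rightarrow> bool" where
  "rsubmodule R M N \<longleftrightarrow> N \<subseteq> carrier M \<and> \<zero>\<^bsub>M\<^esub> \<in> N \<and>
     (\<forall>x\<in>N. \<forall>y\<in>N. x \<oplus>\<^bsub>M\<^esub> y \<in> N) \<and> (\<forall>x\<in>N. \<ominus>\<^bsub>M\<^esub> x \<in> N) \<and>
     (\<forall>x\<in>N. \<forall>r\<in>carrier R. rsmult M x r \<in> N)"

definition essential_rsubmodule ::
  "('a, 'c) ring_scheme \<Rightarrow> ('a, 'b, 'd) rmodule_scheme \<Rightarrow> 'b set \<Rightarrow> bool" where
  "essential_rsubmodule R M N \<longleftrightarrow> rsubmodule R M N \<and>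
     (\<forall>K. rsubmodule R M K \<and> K \<noteq> {\<zero>\<^bsub>M\<^esub>} \<longrightarrow> K \<inter> N \<noteq> {\<zero>\<^bsub>M\<^esub>})"

definition right_ideal :: "('a, 'c) ring_scheme \<Rightarrow> 'a set \<Rightarrow> bool" where
  "right_ideal R I \<longleftrightarrow> additive_subgroup I R \<and>
     (\<forall>a\<in>I. \<forall>r\<in>carrier R. a \<otimes>\<^bsub>R\<^esub> r \<in> I)"

text \<open>Injective right module, via Baer's criterion: every R-linear map from a right
  ideal of R into E is given by left multiplication by an element of E.\<close>
definition injective_rmodule ::
  "('a, 'c) ring_scheme \<Rightarrow> ('a, 'b, 'd) rmodule_scheme \<Rightarrow> bool" where
  "injective_rmodule R E \<longleftrightarrow> right_module R E \<and>
     (\<forall>I f. right_ideal R I \<and> f \<in> I \<rightarrow> carrier E \<and>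
        (\<forall>a\<in>I. \<forall>b\<in>I. f (a \<oplus>\<^bsub>R\<^esub> b) = f a \<oplus>\<^bsub>E\<^esub> f b) \<and>
        (\<forall>a\<in>I. \<forall>r\<in>carrier R. f (a \<otimes>\<^bsub>R\<^esub> r) = rsmult E (f a) r)
      \<longrightarrow> (\<exists>e\<in>carrier E. \<forall>a\<in>I. f a = rsmult E e a))"

definition injective_hull ::
  "('a, 'c) ring_scheme \<Rightarrow> ('a, 'b, 'd) rmodule_scheme \<Rightarrow> ('a, 'e, 'f) rmodule_scheme
     \<Rightarrow> ('b \<Rightarrow> 'e) \<Rightarrow> bool" where
  "injective_hull R M E i \<longleftrightarrow> injective_rmodule R E \<and>
     i \<in> rmod_hom R M E \<and> inj_on i (carrier M) \<and>
     essential_rsubmodule R E (i ` carrier M)"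

end

theory Submission
  imports Defs
begin

lemma F2_ring: "cring F2" by (simp add: F2_def ZFact_is_cring)
lemma F2_domain: "domain F2"
  unfolding F2_def by (rule ZFact_prime_is_domain) simp
lemma F2_carrier: "carrier F2 = {\<zero>\<^bsub>F2\<^esub>, \<one>\<^bsub>F2\<^esub>}"
proof -
  have c: "Idl\<^bsub>\<Z>\<^esub> {2} +>\<^bsub>\<Z>\<^esub> a = {x * 2 + a | x. True}" for a :: int
    by (auto simp: int_Idl a_r_coset_def')
  have e: "{x * 2 + a | x. True} = {x * 2 + (a mod 2) | x::int. True}" for a :: int
  proof -
    have "a = (a div 2) * 2 + a mod 2" by simp
    show ?thesis
    proof (rule Set.set_eqI, rule iffI)
      fix y assume "y \<in> {x * 2 + a | x. True}"
      then obtain x where "y = x * 2 + a" by blast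
      then have "y = (x + a div 2) * 2 + a mod 2" by (simp add: algebra_simps)
      then show "y \<in> {x * 2 + (a mod 2) | x::int. True}" by blast
    next
      fix y assume "y \<in> {x * 2 + (a mod 2) | x::int. True}"
      then obtain x where "y = x * 2 + a mod 2" by blast
      then have "y = (x - a div 2) * 2 + a" using \<open>a = _\<close> by (simp add: algebra_simps)
      then show "y \<in> {x * 2 + a | x::int. True}" by blast
    qed
  qed
  have "Idl\<^bsub>\<Z>\<^esub> {2} +>\<^bsub>\<Z>\<^esub> a = Idl\<^bsub>\<Z>\<^esub> {2} +>\<^bsub>\<Z>\<^esub> 0 \<or> Idl\<^bsub>\<Z>\<^esub> {2} +>\<^bsub>\<Z>\<^esub> a = Idl\<^bsub>\<Z>\<^esub> {2} +>\<^bsub>\<Z>\<^esub> 1" for a :: int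
  proof -
    have "a mod 2 = 0 \<or> a mod 2 = 1" by presburger
    then show ?thesis unfolding c using e[of a] e[of 0] e[of 1] by auto
  qed
  moreover have "Idl\<^bsub>\<Z>\<^esub> {2} +>\<^bsub>\<Z>\<^esub> 0 = Idl\<^bsub>\<Z>\<^esub> {2}" by (auto simp: int_Idl a_r_coset_def')
  ultimately show ?thesis
    by (auto simp: F2_def ZFact_defs A_RCOSETS_def')
qed


locale rmod =
  fixes R :: "('a, 'c) ring_scheme" and M :: "('a, 'b, 'd) rmodule_scheme"
  assumes rm: "right_module R M"

sublocale rmod \<subseteq> R: ring R using rm by (simp add: right_module_def)
sublocale rmod \<subseteq> M: abelian_group M using rm by (simp add: right_module_def)

context rmod begin

lemma sm_closed [simp]: "x \<in> carrier M \<Longrightarrow> r \<in> carrier R \<Longrightarrow> rsmult M x r \<in> carrier M"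
  using rm by (simp add: right_module_def)
lemma sm_ldistr: "x \<in> carrier M \<Longrightarrow> y \<in> carrier M \<Longrightarrow> r \<in> carrier R \<Longrightarrow>
   rsmult M (x \<oplus>\<^bsub>M\<^esub> y) r = rsmult M x r \<oplus>\<^bsub>M\<^esub> rsmult M y r"
  using rm by (simp add: right_module_def)
lemma sm_rdistr: "x \<in> carrier M \<Longrightarrow> r \<in> carrier R \<Longrightarrow> s \<in> carrier R \<Longrightarrow>
   rsmult M x (r \<oplus>\<^bsub>R\<^esub> s) = rsmult M x r \<oplus>\<^bsub>M\<^esub> rsmult M x s"
  using rm by (simp add: right_module_def)
lemma sm_assoc: "x \<in> carrier M \<Longrightarrow> r \<in> carrier R \<Longrightarrow> s \<in> carrier R \<Longrightarrow>
   rsmult M x (r \<otimes>\<^bsub>R\<^esub> s) = rsmult M (rsmult M x r) s"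
  using rm by (simp add: right_module_def)
lemma sm_one [simp]: "x \<in> carrier M \<Longrightarrow> rsmult M x \<one>\<^bsub>R\<^esub> = x"
  using rm by (simp add: right_module_def)

lemma sm_zero_r [simp]: "x \<in> carrier M \<Longrightarrow> rsmult M x \<zero>\<^bsub>R\<^esub> = \<zero>\<^bsub>M\<^esub>"
proof -
  assume x: "x \<in> carrier M"
  have "rsmult M x \<zero>\<^bsub>R\<^esub> \<oplus>\<^bsub>M\<^esub> rsmult M x \<zero>\<^bsub>R\<^esub> = rsmult M x \<zero>\<^bsub>R\<^esub>"
    using sm_rdistr[OF x, of "\<zero>\<^bsub>R\<^esub>" "\<zero>\<^bsub>R\<^esub>"] by simp
  then show ?thesis using x by simp
qed

lemma sm_zero_l [simp]: "r \<in> carrier R \<Longrightarrow> rsmult M \<zero>\<^bsub>M\<^esub> r = \<zero>\<^bsub>M\<^esub>"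
proof -
  assume r: "r \<in> carrier R"
  have "rsmult M \<zero>\<^bsub>M\<^esub> r \<oplus>\<^bsub>M\<^esub> rsmult M \<zero>\<^bsub>M\<^esub> r = rsmult M \<zero>\<^bsub>M\<^esub> r"
    using sm_ldistr[OF _ _ r, of "\<zero>\<^bsub>M\<^esub>" "\<zero>\<^bsub>M\<^esub>"] by simp
  then show ?thesis using r by simp
qed

lemma sm_neg_r: "x \<in> carrier M \<Longrightarrow> r \<in> carrier R \<Longrightarrow>
   rsmult M x (\<ominus>\<^bsub>R\<^esub> r) = \<ominus>\<^bsub>M\<^esub> rsmult M x r"
proof -
  assume x: "x \<in> carrier M" and r: "r \<in> carrier R"
  have "rsmult M x (\<ominus>\<^bsub>R\<^esub> r) \<oplus>\<^bsub>M\<^esub> rsmult M x r = \<zero>\<^bsub>M\<^esub>"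
    using sm_rdistr[OF x, of "\<ominus>\<^bsub>R\<^esub> r" r] r x by (simp add: R.l_neg)
  note eq = this show ?thesis by (rule M.minus_equality[symmetric]) (use eq x r in auto)
qed

lemma sm_neg_l: "x \<in> carrier M \<Longrightarrow> r \<in> carrier R \<Longrightarrow>
   rsmult M (\<ominus>\<^bsub>M\<^esub> x) r = \<ominus>\<^bsub>M\<^esub> rsmult M x r"
proof -
  assume x: "x \<in> carrier M" and r: "r \<in> carrier R"
  have "rsmult M (\<ominus>\<^bsub>M\<^esub> x) r \<oplus>\<^bsub>M\<^esub> rsmult M x r = \<zero>\<^bsub>M\<^esub>"
    using sm_ldistr[of "\<ominus>\<^bsub>M\<^esub> x" x r] r x by (simp add: M.l_neg)
  note eq = this show ?thesis by (rule M.minus_equality[symmetric]) (use eq x r in auto)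
qed

end

lemma hom_closed: "f \<in> rmod_hom R M N \<Longrightarrow> x \<in> carrier M \<Longrightarrow> f x \<in> carrier N"
  by (auto simp: rmod_hom_def)
lemma hom_add: "f \<in> rmod_hom R M N \<Longrightarrow> x \<in> carrier M \<Longrightarrow> y \<in> carrier M \<Longrightarrow>
    f (x \<oplus>\<^bsub>M\<^esub> y) = f x \<oplus>\<^bsub>N\<^esub> f y"
  by (auto simp: rmod_hom_def)
lemma hom_sm: "f \<in> rmod_hom R M N \<Longrightarrow> x \<in> carrier M \<Longrightarrow> r \<in> carrier R \<Longrightarrow>
    f (rsmult M x r) = rsmult N (f x) r"
  by (auto simp: rmod_hom_def)
lemma hom_restrict: "f \<in> rmod_hom R M N \<Longrightarrow> (\<lambda>x\<in>carrier M. f x) = f"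
  by (auto simp: rmod_hom_def)
lemma hom_eqI: "f \<in> rmod_hom R M N \<Longrightarrow> g \<in> rmod_hom R M N \<Longrightarrow> (\<And>x. x \<in> carrier M \<Longrightarrow> f x = g x) \<Longrightarrow> f = g"
  by (metis hom_restrict restrict_ext)
lemma homI:
  assumes "\<And>x. x \<in> carrier M \<Longrightarrow> f x \<in> carrier N"
    and "\<And>x. x \<notin> carrier M \<Longrightarrow> f x = undefined"
    and "\<And>x y. x \<in> carrier M \<Longrightarrow> y \<in> carrier M \<Longrightarrow> f (x \<oplus>\<^bsub>M\<^esub> y) = f x \<oplus>\<^bsub>N\<^esub> f y"
    and "\<And>x r. x \<in> carrier M \<Longrightarrow> r \<in> carrier R \<Longrightarrow> f (rsmult M x r) = rsmult N (f x) r"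
  shows "f \<in> rmod_hom R M N"
  using assms by (auto simp: rmod_hom_def)

lemma hom_zero:
  assumes "abelian_group M" "abelian_group N" "f \<in> rmod_hom R M N"
  shows "f \<zero>\<^bsub>M\<^esub> = \<zero>\<^bsub>N\<^esub>"
proof -
  interpret M: abelian_group M by fact
  interpret N: abelian_group N by fact
  have "f \<zero>\<^bsub>M\<^esub> \<oplus>\<^bsub>N\<^esub> f \<zero>\<^bsub>M\<^esub> = f \<zero>\<^bsub>M\<^esub>"
    using hom_add[OF assms(3), of "\<zero>\<^bsub>M\<^esub>" "\<zero>\<^bsub>M\<^esub>"] by simp
  then show ?thesis using hom_closed[OF assms(3) M.zero_closed] by simp
qed

lemma hom_neg:
  assumes "abelian_group M" "abelian_group N" "f \<in> rmod_hom R M N" "x \<in> carrier M"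
  shows "f (\<ominus>\<^bsub>M\<^esub> x) = \<ominus>\<^bsub>N\<^esub> f x"
proof -
  interpret M: abelian_group M by fact
  interpret N: abelian_group N by fact
  have "f (\<ominus>\<^bsub>M\<^esub> x) \<oplus>\<^bsub>N\<^esub> f x = \<zero>\<^bsub>N\<^esub>"
    using hom_add[OF assms(3), of "\<ominus>\<^bsub>M\<^esub> x" x] hom_zero[OF assms(1-3)] assms(4) by (simp add: M.l_neg)
  note eq = this show ?thesis by (rule N.minus_equality[symmetric]) (use eq assms hom_closed[OF assms(3)] in auto)
qed

lemma End_carrier [simp]: "carrier (End_ring R M) = rmod_hom R M M"
  by (simp add: End_ring_def)
lemma End_mult [simp]: "f \<otimes>\<^bsub>End_ring R M\<^esub> g = (\<lambda>x\<in>carrier M. f (g x))"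
  by (simp add: End_ring_def)
lemma End_add [simp]: "f \<oplus>\<^bsub>End_ring R M\<^esub> g = (\<lambda>x\<in>carrier M. f x \<oplus>\<^bsub>M\<^esub> g x)"
  by (simp add: End_ring_def)
lemma End_one [simp]: "\<one>\<^bsub>End_ring R M\<^esub> = (\<lambda>x\<in>carrier M. x)"
  by (simp add: End_ring_def)
lemma End_zero [simp]: "\<zero>\<^bsub>End_ring R M\<^esub> = (\<lambda>x\<in>carrier M. \<zero>\<^bsub>M\<^esub>)"
  by (simp add: End_ring_def)

context rmod begin

lemma hom_add_closed: "f \<in> rmod_hom R M M \<Longrightarrow> g \<in> rmod_hom R M M \<Longrightarrow>
   (\<lambda>x\<in>carrier M. f x \<oplus>\<^bsub>M\<^esub> g x) \<in> rmod_hom R M M"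
proof (rule homI)
  fix x y assume f: "f \<in> rmod_hom R M M" and g: "g \<in> rmod_hom R M M" and x: "x \<in> carrier M" and y: "y \<in> carrier M"
  have fx: "f x \<in> carrier M" "f y \<in> carrier M" "g x \<in> carrier M" "g y \<in> carrier M"
    using f g x y by (auto simp: hom_closed)
  have "f (x \<oplus>\<^bsub>M\<^esub> y) \<oplus>\<^bsub>M\<^esub> g (x \<oplus>\<^bsub>M\<^esub> y) = (f x \<oplus>\<^bsub>M\<^esub> g x) \<oplus>\<^bsub>M\<^esub> (f y \<oplus>\<^bsub>M\<^esub> g y)"
    using fx by (simp add: hom_add[OF f x y] hom_add[OF g x y] M.a_ac)
  then show "(\<lambda>x\<in>carrier M. f x \<oplus>\<^bsub>M\<^esub> g x) (x \<oplus>\<^bsub>M\<^esub> y) =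
     (\<lambda>x\<in>carrier M. f x \<oplus>\<^bsub>M\<^esub> g x) x \<oplus>\<^bsub>M\<^esub> (\<lambda>x\<in>carrier M. f x \<oplus>\<^bsub>M\<^esub> g x) y"
    using x y by simp
next
  fix x r assume f: "f \<in> rmod_hom R M M" and g: "g \<in> rmod_hom R M M" and x: "x \<in> carrier M" and r: "r \<in> carrier R"
  show "(\<lambda>x\<in>carrier M. f x \<oplus>\<^bsub>M\<^esub> g x) (rsmult M x r) = rsmult M ((\<lambda>x\<in>carrier M. f x \<oplus>\<^bsub>M\<^esub> g x) x) r"
    using x r by (simp add: hom_sm[OF f x r] hom_sm[OF g x r] sm_ldistr hom_closed[OF f] hom_closed[OF g])
qed (auto simp: hom_closed)

lemma hom_comp_closed: "f \<in> rmod_hom R M M \<Longrightarrow> g \<in> rmod_hom R M M \<Longrightarrow>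
   (\<lambda>x\<in>carrier M. f (g x)) \<in> rmod_hom R M M"
  by (rule homI) (simp_all add: hom_closed hom_add hom_sm)

lemma hom_id_closed: "(\<lambda>x\<in>carrier M. x) \<in> rmod_hom R M M"
  by (rule homI) auto

lemma hom_zero_closed: "(\<lambda>x\<in>carrier M. \<zero>\<^bsub>M\<^esub>) \<in> rmod_hom R M M"
  by (rule homI) auto

lemma hom_neg_closed: "f \<in> rmod_hom R M M \<Longrightarrow> (\<lambda>x\<in>carrier M. \<ominus>\<^bsub>M\<^esub> f x) \<in> rmod_hom R M M"
  by (rule homI) (simp_all add: hom_closed hom_add hom_sm sm_neg_l M.minus_add M.a_comm)

lemma End_ring_ring: "ring (End_ring R M)"
proof (rule ringI)
  show "abelian_group (End_ring R M)"
  proof (rule abelian_groupI, goal_cases)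
    case 1 then show ?case by (simp add: hom_add_closed)
  next
    case 2 then show ?case by (simp add: hom_zero_closed)
  next
    case (3 x y z) then show ?case
      by (simp add: hom_closed M.a_assoc cong: restrict_cong)
  next
    case (4 x y) then show ?case
      by (simp add: hom_closed M.a_comm cong: restrict_cong)
  next
    case (5 x) then show ?case
      by (simp add: hom_closed hom_restrict cong: restrict_cong)
  next
    case (6 x) then show ?case
      apply (intro bexI[of _ "\<lambda>y\<in>carrier M. \<ominus>\<^bsub>M\<^esub> x y"])
      by (simp_all add: hom_closed M.l_neg hom_neg_closed cong: restrict_cong)
  qed
next
  show "monoid (End_ring R M)"
  proof (rule monoidI, goal_cases)
    case (1 x y) then show ?case by (simp add: hom_comp_closed)
  next
    case 2 then show ?case by (simp add: hom_id_closed)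
  next
    case (3 x y z) then show ?case
      by (simp add: hom_closed cong: restrict_cong)
  next
    case (4 x) then show ?case
      by (simp add: hom_closed hom_restrict cong: restrict_cong)
  next
    case (5 x) then show ?case
      by (simp add: hom_closed hom_restrict cong: restrict_cong)
  qed
next
  fix x y z assume "x \<in> carrier (End_ring R M)" "y \<in> carrier (End_ring R M)" "z \<in> carrier (End_ring R M)"
  then show "(x \<oplus>\<^bsub>End_ring R M\<^esub> y) \<otimes>\<^bsub>End_ring R M\<^esub> z = x \<otimes>\<^bsub>End_ring R M\<^esub> z \<oplus>\<^bsub>End_ring R M\<^esub> y \<otimes>\<^bsub>End_ring R M\<^esub> z"
    "z \<otimes>\<^bsub>End_ring R M\<^esub> (x \<oplus>\<^bsub>End_ring R M\<^esub> y) = z \<otimes>\<^bsub>End_ring R M\<^esub> x \<oplus>\<^bsub>End_ring R M\<^esub> z \<otimes>\<^bsub>End_ring R M\<^esub> y"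
    by (simp_all add: hom_closed hom_add cong: restrict_cong)
qed

end


lemma (in abelian_group) eq_shift_aux:
  assumes "a \<in> carrier G" "c \<in> carrier G" "c' \<in> carrier G"
  shows "(a \<oplus> c) \<oplus> (\<ominus> a \<oplus> \<ominus> c') = c \<ominus> c'"
    using a_assoc a_lcomm assms minus_eq r_neg2 by fastforce
lemma (in abelian_group) eq_shift:
  assumes "a \<in> carrier G" "c \<in> carrier G" "a' \<in> carrier G" "c' \<in> carrier G"
  shows "(a \<oplus> c = a' \<oplus> c') \<longleftrightarrow> (c \<ominus> c' = a' \<ominus> a)"
proof -
  have "(a \<oplus> c = a' \<oplus> c') \<longleftrightarrow> (a \<oplus> c) \<oplus> (\<ominus> a \<oplus> \<ominus> c') = (a' \<oplus> c') \<oplus> (\<ominus> a \<oplus> \<ominus> c')"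
    using assms by simp
  also have "(a \<oplus> c) \<oplus> (\<ominus> a \<oplus> \<ominus> c') = c \<ominus> c'"
    using eq_shift_aux assms by simp
  also have "(a' \<oplus> c') \<oplus> (\<ominus> a \<oplus> \<ominus> c') = (c' \<oplus> a') \<oplus> (\<ominus> c' \<oplus> \<ominus> a)"
    using assms by (simp add: a_comm)
  also have "\<dots> = a' \<ominus> a" using eq_shift_aux assms by simp
  finally show ?thesis .
qed

context rmod begin

lemma sm_minus_r: "x \<in> carrier M \<Longrightarrow> r \<in> carrier R \<Longrightarrow> s \<in> carrier R \<Longrightarrow>
   rsmult M x (r \<ominus>\<^bsub>R\<^esub> s) = rsmult M x r \<ominus>\<^bsub>M\<^esub> rsmult M x s"
  by (simp add: R.minus_eq M.minus_eq sm_rdistr sm_neg_r)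

lemma baer_extend:
  assumes inj: "injective_rmodule R M"
    and N: "rsubmodule R M N"
    and f: "\<And>x. x \<in> N \<Longrightarrow> f x \<in> carrier M"
    and fadd: "\<And>x y. x \<in> N \<Longrightarrow> y \<in> N \<Longrightarrow> f (x \<oplus>\<^bsub>M\<^esub> y) = f x \<oplus>\<^bsub>M\<^esub> f y"
    and fsm: "\<And>x r. x \<in> N \<Longrightarrow> r \<in> carrier R \<Longrightarrow> f (rsmult M x r) = rsmult M (f x) r"
  shows "\<exists>g\<in>rmod_hom R M M. \<forall>x\<in>N. g x = f x"
proof -
  have Nsub: "N \<subseteq> carrier M" and N0: "\<zero>\<^bsub>M\<^esub> \<in> N"
    and Nadd: "\<And>x y. x \<in> N \<Longrightarrow> y \<in> N \<Longrightarrow> x \<oplus>\<^bsub>M\<^esub> y \<in> N"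
    and Nsm: "\<And>x r. x \<in> N \<Longrightarrow> r \<in> carrier R \<Longrightarrow> rsmult M x r \<in> N"
    using N by (auto simp: rsubmodule_def)
  define LG where "LG G \<longleftrightarrow> G \<subseteq> carrier M \<times> carrier M \<and>
     (\<forall>a b b'. (a,b) \<in> G \<longrightarrow> (a,b') \<in> G \<longrightarrow> b = b') \<and>
     (\<forall>a b a' b'. (a,b) \<in> G \<longrightarrow> (a',b') \<in> G \<longrightarrow> (a \<oplus>\<^bsub>M\<^esub> a', b \<oplus>\<^bsub>M\<^esub> b') \<in> G) \<and>
     (\<forall>a b r. (a,b) \<in> G \<longrightarrow> r \<in> carrier R \<longrightarrow> (rsmult M a r, rsmult M b r) \<in> G) \<and>
     (\<forall>x\<in>N. (x, f x) \<in> G)" for G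
  have LG_sub: "\<And>G. LG G \<Longrightarrow> G \<subseteq> carrier M \<times> carrier M" unfolding LG_def by blast
  have LG_fun: "\<And>G a b b'. LG G \<Longrightarrow> (a,b) \<in> G \<Longrightarrow> (a,b') \<in> G \<Longrightarrow> b = b'" unfolding LG_def by blast
  have LG_add: "\<And>G a b a' b'. LG G \<Longrightarrow> (a,b) \<in> G \<Longrightarrow> (a',b') \<in> G \<Longrightarrow> (a \<oplus>\<^bsub>M\<^esub> a', b \<oplus>\<^bsub>M\<^esub> b') \<in> G"
    unfolding LG_def by blast
  have LG_sm: "\<And>G a b r. LG G \<Longrightarrow> (a,b) \<in> G \<Longrightarrow> r \<in> carrier R \<Longrightarrow> (rsmult M a r, rsmult M b r) \<in> G"
    unfolding LG_def by blast
  have LG_N: "\<And>G x. LG G \<Longrightarrow> x \<in> N \<Longrightarrow> (x, f x) \<in> G" unfolding LG_def by blast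
  define A where "A = {G. LG G}"
  have "A \<noteq> {}"
  proof -
    have "LG {(x, f x) | x. x \<in> N}" unfolding LG_def using Nsub f fadd fsm Nadd Nsm by auto
    then show ?thesis unfolding A_def by blast
  qed
  moreover have "\<Union>C \<in> A" if "C \<noteq> {}" "subset.chain A C" for C
  proof -
    have CA: "C \<subseteq> A" and ch: "\<And>U V. U \<in> C \<Longrightarrow> V \<in> C \<Longrightarrow> U \<subseteq> V \<or> V \<subseteq> U"
      using that(2) by (auto simp: subset_chain_def)
    have LGC: "\<And>G. G \<in> C \<Longrightarrow> LG G" using CA A_def by auto
    have "LG (\<Union>C)" unfolding LG_def
    proof (intro conjI allI impI ballI)
      show "\<Union>C \<subseteq> carrier M \<times> carrier M" using LGC LG_sub by blast
    next
      fix a b b' assume "(a,b) \<in> \<Union>C" "(a,b') \<in> \<Union>C"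
      then obtain U V where XY: "U \<in> C" "V \<in> C" "(a,b) \<in> U" "(a,b') \<in> V" by blast
      show "b = b'"
      proof (cases "U \<subseteq> V")
        case True then show ?thesis using XY LGC LG_fun by blast
      next
        case False then have "V \<subseteq> U" using ch XY by blast
        then show ?thesis using XY LGC LG_fun by blast
      qed
    next
      fix a b a' b' assume "(a,b) \<in> \<Union>C" "(a',b') \<in> \<Union>C"
      then obtain U V where XY: "U \<in> C" "V \<in> C" "(a,b) \<in> U" "(a',b') \<in> V" by blast
      show "(a \<oplus>\<^bsub>M\<^esub> a', b \<oplus>\<^bsub>M\<^esub> b') \<in> \<Union>C"
      proof (cases "U \<subseteq> V")
        case True then show ?thesis using XY LGC LG_add by blast
      next
        case False then have "V \<subseteq> U" using ch XY by blast
        then show ?thesis using XY LGC LG_add by blast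
      qed
    next
      fix a b r assume "(a,b) \<in> \<Union>C" "r \<in> carrier R"
      then show "(rsmult M a r, rsmult M b r) \<in> \<Union>C" using LGC LG_sm by blast
    next
      fix x assume "x \<in> N"
      then show "(x, f x) \<in> \<Union>C" using LGC LG_N \<open>C \<noteq> {}\<close> by blast
    qed
    then show ?thesis unfolding A_def by simp
  qed
  ultimately obtain G where GA: "G \<in> A" and max: "\<And>U. U \<in> A \<Longrightarrow> G \<subseteq> U \<Longrightarrow> U = G"
    using subset_Zorn_nonempty[of A] by blast
  have LG: "LG G" using GA A_def by simp
  note Gsub = LG_sub[OF LG] and Gfun = LG_fun[OF LG] and Gadd = LG_add[OF LG]
    and Gsm = LG_sm[OF LG] and GN = LG_N[OF LG]
  have Gc: "(a,b) \<in> G \<Longrightarrow> a \<in> carrier M \<and> b \<in> carrier M" for a b using Gsub by blast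
  have G00: "(\<zero>\<^bsub>M\<^esub>, \<zero>\<^bsub>M\<^esub>) \<in> G"
    using Gsm[OF GN[OF N0] R.zero_closed] f[OF N0] by simp
  have Gneg: "(a,b) \<in> G \<Longrightarrow> (\<ominus>\<^bsub>M\<^esub> a, \<ominus>\<^bsub>M\<^esub> b) \<in> G" for a b
    using Gsm[of a b "\<ominus>\<^bsub>R\<^esub> \<one>\<^bsub>R\<^esub>"] Gc[of a b] by (simp add: sm_neg_r)
  have Gminus: "(a,b) \<in> G \<Longrightarrow> (a',b') \<in> G \<Longrightarrow> (a' \<ominus>\<^bsub>M\<^esub> a, b' \<ominus>\<^bsub>M\<^esub> b) \<in> G" for a b a' b'
    using Gadd[OF _ Gneg, of a' b' a b] by (simp add: M.minus_eq)
  have dom: "\<forall>y\<in>carrier M. \<exists>b. (y,b) \<in> G"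
  proof (rule ccontr)
    assume "\<not> (\<forall>y\<in>carrier M. \<exists>b. (y,b) \<in> G)"
    then obtain x where x: "x \<in> carrier M" and xn: "\<And>b. (x,b) \<notin> G" by blast
    define I where "I = {r \<in> carrier R. \<exists>b. (rsmult M x r, b) \<in> G}"
    define \<phi> where "\<phi> r = (THE b. (rsmult M x r, b) \<in> G)" for r
    have \<phi>: "(rsmult M x r, \<phi> r) \<in> G" if rI0: "r \<in> I" for r
    proof -
      obtain b where "(rsmult M x r, b) \<in> G" using rI0 I_def by blast
      then have "\<exists>!b. (rsmult M x r, b) \<in> G" using Gfun by blast
      then show ?thesis unfolding \<phi>_def by (rule theI')
    qed
    have \<phi>u: "\<phi> r = b" if "r \<in> I" "(rsmult M x r, b) \<in> G" for r b
      using \<phi>[OF that(1)] that(2) Gfun by blast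
    have I_sub: "I \<subseteq> carrier R" unfolding I_def by blast
    have Ic: "\<And>r. r \<in> I \<Longrightarrow> r \<in> carrier R" using I_sub by blast
    have I_add: "a \<oplus>\<^bsub>R\<^esub> b \<in> I" if "a \<in> I" "b \<in> I" for a b
    proof -
      have "(rsmult M x (a \<oplus>\<^bsub>R\<^esub> b), \<phi> a \<oplus>\<^bsub>M\<^esub> \<phi> b) \<in> G"
        using Gadd[OF \<phi>[OF that(1)] \<phi>[OF that(2)]] that Ic x by (simp add: sm_rdistr Ic)
      then show ?thesis using that I_sub unfolding I_def by blast
    qed
    have I_neg: "\<ominus>\<^bsub>R\<^esub> a \<in> I" if "a \<in> I" for a
    proof -
      have "(rsmult M x (\<ominus>\<^bsub>R\<^esub> a), \<ominus>\<^bsub>M\<^esub> \<phi> a) \<in> G"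
        using Gneg[OF \<phi>[OF that]] that Ic x by (simp add: sm_neg_r Ic)
      then show ?thesis using that I_sub unfolding I_def by blast
    qed
    have I_sm: "a \<otimes>\<^bsub>R\<^esub> r \<in> I" if "a \<in> I" "r \<in> carrier R" for a r
    proof -
      have "(rsmult M x (a \<otimes>\<^bsub>R\<^esub> r), rsmult M (\<phi> a) r) \<in> G"
        using Gsm[OF \<phi>[OF that(1)] that(2)] that Ic x by (simp add: sm_assoc Ic)
      then show ?thesis using that I_sub unfolding I_def by blast
    qed
    have I0: "\<zero>\<^bsub>R\<^esub> \<in> I" unfolding I_def using x G00 by auto
    have rI: "right_ideal R I" unfolding right_ideal_def
    proof (intro conjI ballI)
      show "additive_subgroup I R"
        by (rule additive_subgroupI, rule R.add.subgroupI) (use I_sub I0 I_neg I_add in auto)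
    qed (rule I_sm)
    have \<phi>c: "\<phi> \<in> I \<rightarrow> carrier M" using \<phi> Gc by blast
    have \<phi>add: "\<forall>a\<in>I. \<forall>b\<in>I. \<phi> (a \<oplus>\<^bsub>R\<^esub> b) = \<phi> a \<oplus>\<^bsub>M\<^esub> \<phi> b"
    proof (intro ballI)
      fix a b assume ab: "a \<in> I" "b \<in> I"
      have "(rsmult M x (a \<oplus>\<^bsub>R\<^esub> b), \<phi> a \<oplus>\<^bsub>M\<^esub> \<phi> b) \<in> G"
        using Gadd[OF \<phi>[OF ab(1)] \<phi>[OF ab(2)]] ab Ic x by (simp add: sm_rdistr Ic)
      then show "\<phi> (a \<oplus>\<^bsub>R\<^esub> b) = \<phi> a \<oplus>\<^bsub>M\<^esub> \<phi> b" using \<phi>u I_add ab by blast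
    qed
    have \<phi>sm: "\<forall>a\<in>I. \<forall>r\<in>carrier R. \<phi> (a \<otimes>\<^bsub>R\<^esub> r) = rsmult M (\<phi> a) r"
    proof (intro ballI)
      fix a r assume ar: "a \<in> I" "r \<in> carrier R"
      have "(rsmult M x (a \<otimes>\<^bsub>R\<^esub> r), rsmult M (\<phi> a) r) \<in> G"
        using Gsm[OF \<phi>[OF ar(1)] ar(2)] ar Ic x by (simp add: sm_assoc Ic)
      then show "\<phi> (a \<otimes>\<^bsub>R\<^esub> r) = rsmult M (\<phi> a) r" using \<phi>u I_sm ar by blast
    qed
    obtain e where e: "e \<in> carrier M" and eI: "\<And>a. a \<in> I \<Longrightarrow> \<phi> a = rsmult M e a"
    proof -
      have bc: "\<forall>I f. right_ideal R I \<and> f \<in> I \<rightarrow> carrier M \<and>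
        (\<forall>a\<in>I. \<forall>b\<in>I. f (a \<oplus>\<^bsub>R\<^esub> b) = f a \<oplus>\<^bsub>M\<^esub> f b) \<and>
        (\<forall>a\<in>I. \<forall>r\<in>carrier R. f (a \<otimes>\<^bsub>R\<^esub> r) = rsmult M (f a) r)
      \<longrightarrow> (\<exists>e\<in>carrier M. \<forall>a\<in>I. f a = rsmult M e a)"
        using inj unfolding injective_rmodule_def by (elim conjE)
      have "\<exists>e\<in>carrier M. \<forall>a\<in>I. \<phi> a = rsmult M e a"
        using spec[OF spec[OF bc, of I], of \<phi>] rI \<phi>c \<phi>add \<phi>sm by blast
      then show ?thesis using that by blast
    qed
    define G' where "G' = {(a \<oplus>\<^bsub>M\<^esub> rsmult M x r, b \<oplus>\<^bsub>M\<^esub> rsmult M e r) | a b r. (a,b) \<in> G \<and> r \<in> carrier R}"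
    have G'I: "(a \<oplus>\<^bsub>M\<^esub> rsmult M x r, b \<oplus>\<^bsub>M\<^esub> rsmult M e r) \<in> G'" if "(a,b) \<in> G" "r \<in> carrier R" for a b r
      using that unfolding G'_def by blast
    have G'E: "\<exists>a b r. p = a \<oplus>\<^bsub>M\<^esub> rsmult M x r \<and> q = b \<oplus>\<^bsub>M\<^esub> rsmult M e r \<and> (a,b) \<in> G \<and> r \<in> carrier R"
      if "(p,q) \<in> G'" for p q using that unfolding G'_def by blast
    have "LG G'" unfolding LG_def
    proof (intro conjI allI impI ballI)
      show "G' \<subseteq> carrier M \<times> carrier M" unfolding G'_def using Gc x e by auto
    next
      fix p q q' assume "(p,q) \<in> G'" "(p,q') \<in> G'"
      then obtain a b r a' b' r' where
        1: "p = a \<oplus>\<^bsub>M\<^esub> rsmult M x r" "q = b \<oplus>\<^bsub>M\<^esub> rsmult M e r" "(a,b) \<in> G" "r \<in> carrier R" and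
        2: "p = a' \<oplus>\<^bsub>M\<^esub> rsmult M x r'" "q' = b' \<oplus>\<^bsub>M\<^esub> rsmult M e r'" "(a',b') \<in> G" "r' \<in> carrier R"
        using G'E by metis
      have c: "a \<in> carrier M" "b \<in> carrier M" "a' \<in> carrier M" "b' \<in> carrier M" using Gc 1 2 by auto
      have "rsmult M x r \<ominus>\<^bsub>M\<^esub> rsmult M x r' = a' \<ominus>\<^bsub>M\<^esub> a"
        using M.eq_shift[of a "rsmult M x r" a' "rsmult M x r'"] 1 2 c x by simp
      then have xr: "rsmult M x (r \<ominus>\<^bsub>R\<^esub> r') = a' \<ominus>\<^bsub>M\<^esub> a" using sm_minus_r x 1 2 by simp
      have inG: "(rsmult M x (r \<ominus>\<^bsub>R\<^esub> r'), b' \<ominus>\<^bsub>M\<^esub> b) \<in> G" using xr Gminus 1 2 by simp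
      have rI': "r \<ominus>\<^bsub>R\<^esub> r' \<in> I" unfolding I_def using inG 1 2 by auto
      have "b' \<ominus>\<^bsub>M\<^esub> b = rsmult M e (r \<ominus>\<^bsub>R\<^esub> r')" using \<phi>u[OF rI' inG] eI[OF rI'] by simp
      also have "\<dots> = rsmult M e r \<ominus>\<^bsub>M\<^esub> rsmult M e r'" using sm_minus_r e 1 2 by simp
      finally show "q = q'"
        using M.eq_shift[of b "rsmult M e r" b' "rsmult M e r'"] 1 2 c e by simp
    next
      fix p q p' q' assume "(p,q) \<in> G'" "(p',q') \<in> G'"
      then obtain a b r a' b' r' where
        1: "p = a \<oplus>\<^bsub>M\<^esub> rsmult M x r" "q = b \<oplus>\<^bsub>M\<^esub> rsmult M e r" "(a,b) \<in> G" "r \<in> carrier R" and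
        2: "p' = a' \<oplus>\<^bsub>M\<^esub> rsmult M x r'" "q' = b' \<oplus>\<^bsub>M\<^esub> rsmult M e r'" "(a',b') \<in> G" "r' \<in> carrier R"
        using G'E by metis
      have c: "a \<in> carrier M" "b \<in> carrier M" "a' \<in> carrier M" "b' \<in> carrier M" using Gc 1 2 by auto
      have "p \<oplus>\<^bsub>M\<^esub> p' = (a \<oplus>\<^bsub>M\<^esub> a') \<oplus>\<^bsub>M\<^esub> rsmult M x (r \<oplus>\<^bsub>R\<^esub> r')"
        using 1 2 c x by (simp add: sm_rdistr M.a_ac)
      moreover have "q \<oplus>\<^bsub>M\<^esub> q' = (b \<oplus>\<^bsub>M\<^esub> b') \<oplus>\<^bsub>M\<^esub> rsmult M e (r \<oplus>\<^bsub>R\<^esub> r')"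
        using 1 2 c e by (simp add: sm_rdistr M.a_ac)
      ultimately show "(p \<oplus>\<^bsub>M\<^esub> p', q \<oplus>\<^bsub>M\<^esub> q') \<in> G'"
        using G'I[OF Gadd[OF 1(3) 2(3)]] 1 2 by simp
    next
      fix p q s assume "(p,q) \<in> G'" "s \<in> carrier R"
      then obtain a b r where
        1: "p = a \<oplus>\<^bsub>M\<^esub> rsmult M x r" "q = b \<oplus>\<^bsub>M\<^esub> rsmult M e r" "(a,b) \<in> G" "r \<in> carrier R"
        using G'E by metis
      have c: "a \<in> carrier M" "b \<in> carrier M" using Gc 1 by auto
      have "rsmult M p s = rsmult M a s \<oplus>\<^bsub>M\<^esub> rsmult M x (r \<otimes>\<^bsub>R\<^esub> s)"
        using 1 c x \<open>s \<in> carrier R\<close> by (simp add: sm_ldistr sm_assoc)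
      moreover have "rsmult M q s = rsmult M b s \<oplus>\<^bsub>M\<^esub> rsmult M e (r \<otimes>\<^bsub>R\<^esub> s)"
        using 1 c e \<open>s \<in> carrier R\<close> by (simp add: sm_ldistr sm_assoc)
      ultimately show "(rsmult M p s, rsmult M q s) \<in> G'"
        using G'I[OF Gsm[OF 1(3) \<open>s \<in> carrier R\<close>]] 1 \<open>s \<in> carrier R\<close> by simp
    next
      fix y assume "y \<in> N"
      then show "(y, f y) \<in> G'" using G'I[OF GN[OF \<open>y \<in> N\<close>] R.zero_closed] Nsub f e x \<open>y \<in> N\<close> by (simp add: subsetD[OF Nsub])
    qed
    moreover have "G \<subseteq> G'"
    proof
      fix p assume "p \<in> G"
      then obtain a b where ab: "p = (a,b)" "(a,b) \<in> G" by (cases p) auto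
      then show "p \<in> G'" using G'I[OF ab(2) R.zero_closed] Gc[of a b] x e by simp
    qed
    ultimately have "G' = G" using max A_def by blast
    moreover have "(x, e) \<in> G'" using G'I[OF G00 R.one_closed] x e by simp
    ultimately show False using xn by blast
  qed
  define g where "g = (\<lambda>y\<in>carrier M. THE b. (y,b) \<in> G)"
  have g: "(y, g y) \<in> G" if "y \<in> carrier M" for y
  proof -
    have "\<exists>!b. (y,b) \<in> G" using dom that Gfun by blast
    then have "(y, THE b. (y,b) \<in> G) \<in> G" by (rule theI')
    then show ?thesis unfolding g_def using that by simp
  qed
  have gu: "g y = b" if "(y,b) \<in> G" for y b
    using g[of y] that Gfun Gc by blast
  have "g \<in> rmod_hom R M M"
  proof (rule homI)
    show "\<And>x. x \<in> carrier M \<Longrightarrow> g x \<in> carrier M" using g Gc by blast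
    show "\<And>x. x \<notin> carrier M \<Longrightarrow> g x = undefined" unfolding g_def by simp
    show "\<And>x y. x \<in> carrier M \<Longrightarrow> y \<in> carrier M \<Longrightarrow> g (x \<oplus>\<^bsub>M\<^esub> y) = g x \<oplus>\<^bsub>M\<^esub> g y"
      using gu Gadd g by blast
    show "\<And>x r. x \<in> carrier M \<Longrightarrow> r \<in> carrier R \<Longrightarrow> g (rsmult M x r) = rsmult M (g x) r"
      using gu Gsm g by blast
  qed
  moreover have "\<forall>x\<in>N. g x = f x" using gu GN by blast
  ultimately show ?thesis by blast
qed

end


context rmod begin

lemma hom_zero': "f \<in> rmod_hom R M M \<Longrightarrow> f \<zero>\<^bsub>M\<^esub> = \<zero>\<^bsub>M\<^esub>"
  by (rule hom_zero[OF M.abelian_group_axioms M.abelian_group_axioms])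
lemma hom_neg': "f \<in> rmod_hom R M M \<Longrightarrow> x \<in> carrier M \<Longrightarrow> f (\<ominus>\<^bsub>M\<^esub> x) = \<ominus>\<^bsub>M\<^esub> f x"
  by (rule hom_neg[OF M.abelian_group_axioms M.abelian_group_axioms])

lemma ker_sub: assumes f: "f \<in> rmod_hom R M M"
  shows "rsubmodule R M {x \<in> carrier M. f x = \<zero>\<^bsub>M\<^esub>}"
  unfolding rsubmodule_def
proof (intro conjI ballI)
  show "{x \<in> carrier M. f x = \<zero>\<^bsub>M\<^esub>} \<subseteq> carrier M" by blast
next
  show "\<zero>\<^bsub>M\<^esub> \<in> {x \<in> carrier M. f x = \<zero>\<^bsub>M\<^esub>}" using hom_zero'[OF f] by simp
next
  fix x assume x: "x \<in> {x \<in> carrier M. f x = \<zero>\<^bsub>M\<^esub>}"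
  then show "\<ominus>\<^bsub>M\<^esub> x \<in> {x \<in> carrier M. f x = \<zero>\<^bsub>M\<^esub>}" using hom_neg'[OF f] by simp
next
  fix x r assume x: "x \<in> {x \<in> carrier M. f x = \<zero>\<^bsub>M\<^esub>}" and r: "r \<in> carrier R"
  then show "rsmult M x r \<in> {x \<in> carrier M. f x = \<zero>\<^bsub>M\<^esub>}"
    using hom_sm[OF f] by simp
next
  fix x y assume x: "x \<in> {x \<in> carrier M. f x = \<zero>\<^bsub>M\<^esub>}" and y: "y \<in> {x \<in> carrier M. f x = \<zero>\<^bsub>M\<^esub>}"
  then show "x \<oplus>\<^bsub>M\<^esub> y \<in> {x \<in> carrier M. f x = \<zero>\<^bsub>M\<^esub>}" using hom_add[OF f] by simp
qed

lemma img_sub: assumes f: "f \<in> rmod_hom R M M"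
  shows "rsubmodule R M (f ` carrier M)"
  unfolding rsubmodule_def
proof (intro conjI ballI)
  show "f ` carrier M \<subseteq> carrier M" using hom_closed[OF f] by blast
next
  have "f \<zero>\<^bsub>M\<^esub> \<in> f ` carrier M" by (rule imageI[OF M.zero_closed])
  then show "\<zero>\<^bsub>M\<^esub> \<in> f ` carrier M" by (simp only: hom_zero'[OF f])
next
  fix y assume "y \<in> f ` carrier M"
  then obtain x where x: "x \<in> carrier M" "y = f x" by blast
  have "f (\<ominus>\<^bsub>M\<^esub> x) \<in> f ` carrier M" by (rule imageI) (use x in simp)
  then show "\<ominus>\<^bsub>M\<^esub> y \<in> f ` carrier M" by (simp only: x(2) hom_neg'[OF f x(1)])
next
  fix y r assume "y \<in> f ` carrier M" and r: "r \<in> carrier R"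
  then obtain x where x: "x \<in> carrier M" "y = f x" by blast
  have "f (rsmult M x r) \<in> f ` carrier M" by (rule imageI) (use x r in simp)
  then show "rsmult M y r \<in> f ` carrier M" by (simp only: x(2) hom_sm[OF f x(1) r])
next
  fix y y' assume "y \<in> f ` carrier M" "y' \<in> f ` carrier M"
  then obtain x x' where x: "x \<in> carrier M" "y = f x" and x': "x' \<in> carrier M" "y' = f x'" by blast
  have "f (x \<oplus>\<^bsub>M\<^esub> x') \<in> f ` carrier M" by (rule imageI) (use x x' in simp)
  then show "y \<oplus>\<^bsub>M\<^esub> y' \<in> f ` carrier M" by (simp only: x(2) x'(2) hom_add[OF f x(1) x'(1)])
qed

end

locale hsetup =
  fixes R :: "('a, 'c) ring_scheme" and M :: "('a, 'b, 'd) rmodule_scheme"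
    and E :: "('a, 'e, 'f) rmodule_scheme" and i :: "'b \<Rightarrow> 'e" and h
  assumes rM: "right_module R M" and hull: "injective_hull R M E i"
    and hh: "h \<in> ring_hom (End_ring R E) F2"
begin

lemma injE: "injective_rmodule R E" using hull by (simp add: injective_hull_def)
lemma rE: "right_module R E" using injE by (simp add: injective_rmodule_def)
lemma ihom: "i \<in> rmod_hom R M E" using hull by (simp add: injective_hull_def)
lemma iinj: "inj_on i (carrier M)" using hull by (simp add: injective_hull_def)
lemma ess: "essential_rsubmodule R E (i ` carrier M)" using hull by (simp add: injective_hull_def)

sublocale mM: rmod R M by (rule rmod.intro, rule rM)
sublocale mE: rmod R E by (rule rmod.intro, rule rE)

lemma Sring: "ring (End_ring R E)" by (rule mE.End_ring_ring)
lemma Tring: "ring (End_ring R M)" by (rule mM.End_ring_ring)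
lemma F2r: "ring F2" using F2_ring cring.axioms(1) by blast

lemma i0: "i \<zero>\<^bsub>M\<^esub> = \<zero>\<^bsub>E\<^esub>"
  by (rule hom_zero[OF mM.M.abelian_group_axioms mE.M.abelian_group_axioms ihom])

lemma essP: "rsubmodule R E K \<Longrightarrow> K \<noteq> {\<zero>\<^bsub>E\<^esub>} \<Longrightarrow> K \<inter> i ` carrier M \<noteq> {\<zero>\<^bsub>E\<^esub>}"
  using ess unfolding essential_rsubmodule_def by blast

lemma kill:
  assumes s: "s \<in> rmod_hom R E E" and sk: "\<And>m. m \<in> carrier M \<Longrightarrow> s (i m) = \<zero>\<^bsub>E\<^esub>"
  shows "h s = \<zero>\<^bsub>F2\<^esub>"
proof -
  define S where "S = End_ring R E"
  define ns where "ns = (\<lambda>x\<in>carrier E. \<ominus>\<^bsub>E\<^esub> s x)"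
  have ns: "ns \<in> rmod_hom R E E" unfolding ns_def by (rule mE.hom_neg_closed[OF s])
  define u where "u = (\<lambda>x\<in>carrier E. x \<oplus>\<^bsub>E\<^esub> ns x)"
  have u: "u \<in> rmod_hom R E E" unfolding u_def
    using mE.hom_add_closed[OF mE.hom_id_closed ns] by (simp cong: restrict_cong)
  have uS: "u \<in> carrier S" using u S_def by simp
  have sS: "s \<in> carrier S" using s S_def by simp
  have us: "u \<oplus>\<^bsub>S\<^esub> s = \<one>\<^bsub>S\<^esub>"
    unfolding S_def u_def ns_def using s
    by (simp add: hom_closed mE.M.a_assoc mE.M.l_neg cong: restrict_cong)
  have ui: "u (i m) = i m" if "m \<in> carrier M" for m
    using that sk hom_closed[OF ihom] unfolding u_def ns_def by simp
  have ker: "{x \<in> carrier E. u x = \<zero>\<^bsub>E\<^esub>} = {\<zero>\<^bsub>E\<^esub>}"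
  proof (rule ccontr)
    assume ne: "{x \<in> carrier E. u x = \<zero>\<^bsub>E\<^esub>} \<noteq> {\<zero>\<^bsub>E\<^esub>}"
    have "{x \<in> carrier E. u x = \<zero>\<^bsub>E\<^esub>} \<inter> i ` carrier M \<noteq> {\<zero>\<^bsub>E\<^esub>}"
      by (rule essP[OF mE.ker_sub[OF u] ne])
    moreover have "{x \<in> carrier E. u x = \<zero>\<^bsub>E\<^esub>} \<inter> i ` carrier M = {\<zero>\<^bsub>E\<^esub>}"
    proof
      show "{x \<in> carrier E. u x = \<zero>\<^bsub>E\<^esub>} \<inter> i ` carrier M \<subseteq> {\<zero>\<^bsub>E\<^esub>}"
        using ui by auto
      show "{\<zero>\<^bsub>E\<^esub>} \<subseteq> {x \<in> carrier E. u x = \<zero>\<^bsub>E\<^esub>} \<inter> i ` carrier M"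
      proof -
        have "\<zero>\<^bsub>E\<^esub> \<in> {x \<in> carrier E. u x = \<zero>\<^bsub>E\<^esub>}" using mE.hom_zero'[OF u] by simp
        moreover have "\<zero>\<^bsub>E\<^esub> \<in> i ` carrier M" using imageI[OF mM.M.zero_closed, of i] i0 by simp
        ultimately show ?thesis by blast
      qed
    qed
    ultimately show False by blast
  qed
  have uinj: "inj_on u (carrier E)"
  proof (rule inj_onI)
    fix x y assume x: "x \<in> carrier E" and y: "y \<in> carrier E" and eq: "u x = u y"
    have "u (x \<ominus>\<^bsub>E\<^esub> y) = u x \<ominus>\<^bsub>E\<^esub> u y"
      using x y by (simp add: mE.M.minus_eq hom_add[OF u] mE.hom_neg'[OF u])
    also have "\<dots> = \<zero>\<^bsub>E\<^esub>" using eq hom_closed[OF u y] by (simp add: mE.M.minus_eq mE.M.r_neg)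
    finally have "x \<ominus>\<^bsub>E\<^esub> y = \<zero>\<^bsub>E\<^esub>" using ker x y by blast
    moreover have "\<zero>\<^bsub>E\<^esub> \<ominus>\<^bsub>E\<^esub> \<zero>\<^bsub>E\<^esub> = \<zero>\<^bsub>E\<^esub>" by (simp add: mE.M.minus_eq mE.M.r_neg)
    ultimately have "x \<ominus>\<^bsub>E\<^esub> y = \<zero>\<^bsub>E\<^esub> \<ominus>\<^bsub>E\<^esub> \<zero>\<^bsub>E\<^esub>" by simp
    then show "x = y" using mE.M.eq_shift[of "\<zero>\<^bsub>E\<^esub>" x "\<zero>\<^bsub>E\<^esub>" y] x y by simp
  qed
  define f where "f = inv_into (carrier E) u"
  have fu: "f (u x) = x" if "x \<in> carrier E" for x
    unfolding f_def using uinj that by (simp add: inv_into_f_f)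
  have "\<exists>w\<in>rmod_hom R E E. \<forall>y\<in>u ` carrier E. w y = f y"
  proof (rule mE.baer_extend[OF injE mE.img_sub[OF u]])
    fix y assume "y \<in> u ` carrier E"
    then show "f y \<in> carrier E" using fu by auto
  next
    fix y y' assume "y \<in> u ` carrier E" "y' \<in> u ` carrier E"
    then obtain x x' where x: "x \<in> carrier E" "y = u x" and x': "x' \<in> carrier E" "y' = u x'" by blast
    have "f (y \<oplus>\<^bsub>E\<^esub> y') = f (u (x \<oplus>\<^bsub>E\<^esub> x'))" using x x' hom_add[OF u x(1) x'(1)] by simp
    also have "\<dots> = x \<oplus>\<^bsub>E\<^esub> x'" using fu x x' by simp
    also have "\<dots> = f y \<oplus>\<^bsub>E\<^esub> f y'" using fu x x' by simp
    finally show "f (y \<oplus>\<^bsub>E\<^esub> y') = f y \<oplus>\<^bsub>E\<^esub> f y'" .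
  next
    fix y r assume "y \<in> u ` carrier E" "r \<in> carrier R"
    then obtain x where x: "x \<in> carrier E" "y = u x" by blast
    have "f (rsmult E y r) = f (u (rsmult E x r))" using x hom_sm[OF u x(1) \<open>r \<in> carrier R\<close>] by simp
    also have "\<dots> = rsmult E x r" using fu x \<open>r \<in> carrier R\<close> by simp
    also have "\<dots> = rsmult E (f y) r" using fu x by simp
    finally show "f (rsmult E y r) = rsmult E (f y) r" .
  qed
  then obtain w where w: "w \<in> rmod_hom R E E" and wf: "\<And>y. y \<in> u ` carrier E \<Longrightarrow> w y = f y" by blast
  have wS: "w \<in> carrier S" using w S_def by simp
  have wu: "w \<otimes>\<^bsub>S\<^esub> u = \<one>\<^bsub>S\<^esub>"
    unfolding S_def using wf fu by (simp cong: restrict_cong)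
  have h1: "h w \<otimes>\<^bsub>F2\<^esub> h u = \<one>\<^bsub>F2\<^esub>"
    using ring_hom_mult[OF hh, of w u] wS uS wu ring_hom_one[OF hh] S_def by simp
  have h2: "h u \<oplus>\<^bsub>F2\<^esub> h s = \<one>\<^bsub>F2\<^esub>"
    using ring_hom_add[OF hh, of u s] sS uS us ring_hom_one[OF hh] S_def by simp
  interpret F: domain F2 by (rule F2_domain)
  have hu: "h u \<in> carrier F2" "h w \<in> carrier F2" "h s \<in> carrier F2"
    using ring_hom_closed[OF hh] uS wS sS S_def by auto
  show ?thesis
  proof (rule ccontr)
    assume "h s \<noteq> \<zero>\<^bsub>F2\<^esub>"
    then have "h s = \<one>\<^bsub>F2\<^esub>" using hu F2_carrier by auto
    then have "h u = \<zero>\<^bsub>F2\<^esub>" using h2 hu by simp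
    then show False using h1 hu by simp
  qed
qed


lemma agree:
  assumes s1: "s1 \<in> rmod_hom R E E" and s2: "s2 \<in> rmod_hom R E E"
    and eq: "\<And>m. m \<in> carrier M \<Longrightarrow> s1 (i m) = s2 (i m)"
  shows "h s1 = h s2"
proof -
  define S where "S = End_ring R E"
  define ns where "ns = (\<lambda>x\<in>carrier E. \<ominus>\<^bsub>E\<^esub> s2 x)"
  have ns: "ns \<in> rmod_hom R E E" unfolding ns_def by (rule mE.hom_neg_closed[OF s2])
  define d where "d = (\<lambda>x\<in>carrier E. s1 x \<oplus>\<^bsub>E\<^esub> ns x)"
  have d: "d \<in> rmod_hom R E E" unfolding d_def by (rule mE.hom_add_closed[OF s1 ns])
  have dk: "d (i m) = \<zero>\<^bsub>E\<^esub>" if m: "m \<in> carrier M" for m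
  proof -
    have im: "i m \<in> carrier E" using hom_closed[OF ihom m] .
    then show ?thesis unfolding d_def ns_def using eq[OF m] hom_closed[OF s2 im]
      by (simp add: mE.M.r_neg)
  qed
  have hd: "h d = \<zero>\<^bsub>F2\<^esub>" by (rule kill[OF d dk])
  have ds: "d \<oplus>\<^bsub>S\<^esub> s2 = s1"
  proof -
    have "d \<oplus>\<^bsub>S\<^esub> s2 = (\<lambda>x\<in>carrier E. d x \<oplus>\<^bsub>E\<^esub> s2 x)" unfolding S_def by simp
    also have "\<dots> = s1"
    proof (rule hom_eqI[OF mE.hom_add_closed[OF d s2] s1])
      fix x assume x: "x \<in> carrier E"
      show "(\<lambda>x\<in>carrier E. d x \<oplus>\<^bsub>E\<^esub> s2 x) x = s1 x"
        unfolding d_def ns_def using x hom_closed[OF s1 x] hom_closed[OF s2 x]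
        by (simp add: mE.M.a_assoc mE.M.l_neg)
    qed
    finally show ?thesis .
  qed
  have "h s1 = h d \<oplus>\<^bsub>F2\<^esub> h s2"
    using ring_hom_add[OF hh, of d s2] ds d s2 S_def by simp
  also have "\<dots> = h s2" using hd ring_hom_closed[OF hh, of s2] s2 F2r ring.ring_simprules(8) by fastforce
  finally show ?thesis .
qed

lemma ext_ex:
  assumes t: "t \<in> rmod_hom R M M"
  shows "\<exists>s\<in>rmod_hom R E E. \<forall>m\<in>carrier M. s (i m) = i (t m)"
proof -
  define g where "g = inv_into (carrier M) i"
  have gi: "g (i m) = m" if "m \<in> carrier M" for m unfolding g_def using iinj that by (simp add: inv_into_f_f)
  define f where "f y = i (t (g y))" for y
  have fi: "f (i m) = i (t m)" if "m \<in> carrier M" for m unfolding f_def using gi that by simp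
  have sub: "rsubmodule R E (i ` carrier M)" using ess unfolding essential_rsubmodule_def by blast
  have "\<exists>s\<in>rmod_hom R E E. \<forall>y\<in>i ` carrier M. s y = f y"
  proof (rule mE.baer_extend[OF injE sub])
    fix y assume "y \<in> i ` carrier M"
    then obtain m where m: "m \<in> carrier M" "y = i m" by blast
    show "f y \<in> carrier E" using m fi hom_closed[OF ihom hom_closed[OF t m(1)]] by simp
  next
    fix y y' assume "y \<in> i ` carrier M" "y' \<in> i ` carrier M"
    then obtain m m' where m: "m \<in> carrier M" "y = i m" and m': "m' \<in> carrier M" "y' = i m'" by blast
    have "f (y \<oplus>\<^bsub>E\<^esub> y') = f (i (m \<oplus>\<^bsub>M\<^esub> m'))" using m m' hom_add[OF ihom m(1) m'(1)] by simp
    also have "\<dots> = i (t (m \<oplus>\<^bsub>M\<^esub> m'))" using fi m m' by simp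
    also have "\<dots> = i (t m) \<oplus>\<^bsub>E\<^esub> i (t m')"
      using hom_add[OF t m(1) m'(1)] hom_add[OF ihom hom_closed[OF t m(1)] hom_closed[OF t m'(1)]] by simp
    also have "\<dots> = f y \<oplus>\<^bsub>E\<^esub> f y'" using fi m m' by simp
    finally show "f (y \<oplus>\<^bsub>E\<^esub> y') = f y \<oplus>\<^bsub>E\<^esub> f y'" .
  next
    fix y r assume "y \<in> i ` carrier M" and r: "r \<in> carrier R"
    then obtain m where m: "m \<in> carrier M" "y = i m" by blast
    have "f (rsmult E y r) = f (i (rsmult M m r))" using m hom_sm[OF ihom m(1) r] by simp
    also have "\<dots> = i (t (rsmult M m r))" using fi m r by simp
    also have "\<dots> = rsmult E (i (t m)) r"
      using hom_sm[OF t m(1) r] hom_sm[OF ihom hom_closed[OF t m(1)] r] by simp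
    also have "\<dots> = rsmult E (f y) r" using fi m by simp
    finally show "f (rsmult E y r) = rsmult E (f y) r" .
  qed
  then obtain s where s: "s \<in> rmod_hom R E E" and sf: "\<And>y. y \<in> i ` carrier M \<Longrightarrow> s y = f y" by blast
  have "\<forall>m\<in>carrier M. s (i m) = i (t m)" using sf fi by simp
  then show ?thesis using s by blast
qed

definition ext where "ext t = (SOME s. s \<in> rmod_hom R E E \<and> (\<forall>m\<in>carrier M. s (i m) = i (t m)))"

lemma ext: assumes t: "t \<in> rmod_hom R M M"
  shows "ext t \<in> rmod_hom R E E" "\<And>m. m \<in> carrier M \<Longrightarrow> ext t (i m) = i (t m)"
proof -
  have "\<exists>s. s \<in> rmod_hom R E E \<and> (\<forall>m\<in>carrier M. s (i m) = i (t m))" using ext_ex[OF t] by blast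
  then have "ext t \<in> rmod_hom R E E \<and> (\<forall>m\<in>carrier M. ext t (i m) = i (t m))"
    unfolding ext_def by (rule someI_ex)
  then show "ext t \<in> rmod_hom R E E" "\<And>m. m \<in> carrier M \<Longrightarrow> ext t (i m) = i (t m)" by auto
qed

lemma psi_hom: "(\<lambda>t. h (ext t)) \<in> ring_hom (End_ring R M) F2"
proof (rule ring_hom_memI)
  fix t assume "t \<in> carrier (End_ring R M)"
  then show "h (ext t) \<in> carrier F2" using ext ring_hom_closed[OF hh] by simp
next
  fix t1 t2 assume "t1 \<in> carrier (End_ring R M)" "t2 \<in> carrier (End_ring R M)"
  then have t1: "t1 \<in> rmod_hom R M M" and t2: "t2 \<in> rmod_hom R M M" by auto
  have c: "(\<lambda>x\<in>carrier M. t1 (t2 x)) \<in> rmod_hom R M M" by (rule mM.hom_comp_closed[OF t1 t2])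
  have "h (ext (\<lambda>x\<in>carrier M. t1 (t2 x))) = h (\<lambda>x\<in>carrier E. ext t1 (ext t2 x))"
  proof (rule agree[OF ext(1)[OF c] mE.hom_comp_closed[OF ext(1)[OF t1] ext(1)[OF t2]]])
    fix m assume m: "m \<in> carrier M"
    show "ext (\<lambda>x\<in>carrier M. t1 (t2 x)) (i m) = (\<lambda>x\<in>carrier E. ext t1 (ext t2 x)) (i m)"
      using ext(2)[OF c m] ext(2)[OF t2 m] ext(2)[OF t1 hom_closed[OF t2 m]] m hom_closed[OF ihom m] by simp
  qed
  also have "\<dots> = h (ext t1) \<otimes>\<^bsub>F2\<^esub> h (ext t2)"
    using ring_hom_mult[OF hh, of "ext t1" "ext t2"] ext(1)[OF t1] ext(1)[OF t2] by simp
  finally show "h (ext (t1 \<otimes>\<^bsub>End_ring R M\<^esub> t2)) = h (ext t1) \<otimes>\<^bsub>F2\<^esub> h (ext t2)" by simp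
next
  fix t1 t2 assume "t1 \<in> carrier (End_ring R M)" "t2 \<in> carrier (End_ring R M)"
  then have t1: "t1 \<in> rmod_hom R M M" and t2: "t2 \<in> rmod_hom R M M" by auto
  have c: "(\<lambda>x\<in>carrier M. t1 x \<oplus>\<^bsub>M\<^esub> t2 x) \<in> rmod_hom R M M" by (rule mM.hom_add_closed[OF t1 t2])
  have "h (ext (\<lambda>x\<in>carrier M. t1 x \<oplus>\<^bsub>M\<^esub> t2 x)) = h (\<lambda>x\<in>carrier E. ext t1 x \<oplus>\<^bsub>E\<^esub> ext t2 x)"
  proof (rule agree[OF ext(1)[OF c] mE.hom_add_closed[OF ext(1)[OF t1] ext(1)[OF t2]]])
    fix m assume m: "m \<in> carrier M"
    show "ext (\<lambda>x\<in>carrier M. t1 x \<oplus>\<^bsub>M\<^esub> t2 x) (i m) = (\<lambda>x\<in>carrier E. ext t1 x \<oplus>\<^bsub>E\<^esub> ext t2 x) (i m)"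
      using ext(2)[OF c m] ext(2)[OF t2 m] ext(2)[OF t1 m] m hom_closed[OF ihom m]
        hom_add[OF ihom hom_closed[OF t1 m] hom_closed[OF t2 m]] by simp
  qed
  also have "\<dots> = h (ext t1) \<oplus>\<^bsub>F2\<^esub> h (ext t2)"
    using ring_hom_add[OF hh, of "ext t1" "ext t2"] ext(1)[OF t1] ext(1)[OF t2] by simp
  finally show "h (ext (t1 \<oplus>\<^bsub>End_ring R M\<^esub> t2)) = h (ext t1) \<oplus>\<^bsub>F2\<^esub> h (ext t2)" by simp
next
  have c: "(\<lambda>x\<in>carrier M. x) \<in> rmod_hom R M M" by (rule mM.hom_id_closed)
  have "h (ext (\<lambda>x\<in>carrier M. x)) = h (\<lambda>x\<in>carrier E. x)"
  proof (rule agree[OF ext(1)[OF c] mE.hom_id_closed])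
    fix m assume m: "m \<in> carrier M"
    show "ext (\<lambda>x\<in>carrier M. x) (i m) = (\<lambda>x\<in>carrier E. x) (i m)"
      using ext(2)[OF c m] m hom_closed[OF ihom m] by simp
  qed
  also have "\<dots> = \<one>\<^bsub>F2\<^esub>" using ring_hom_one[OF hh] by simp
  finally show "h (ext \<one>\<^bsub>End_ring R M\<^esub>) = \<one>\<^bsub>F2\<^esub>" by simp
qed

lemma T_factor: "has_F2_factor (End_ring R M)"
proof -
  let ?p = "\<lambda>t. h (ext t)"
  interpret P: ring_hom_ring "End_ring R M" F2 ?p by (rule ring_hom_ringI2[OF Tring F2r psi_hom])
  have "?p ` carrier (End_ring R M) = carrier F2"
  proof
    show "?p ` carrier (End_ring R M) \<subseteq> carrier F2" using ring_hom_closed[OF psi_hom] by blast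
    have "?p \<zero>\<^bsub>End_ring R M\<^esub> = \<zero>\<^bsub>F2\<^esub>" by (rule ring_hom_zero[OF psi_hom Tring F2r])
    moreover have "?p \<one>\<^bsub>End_ring R M\<^esub> = \<one>\<^bsub>F2\<^esub>" by (rule ring_hom_one[OF psi_hom])
    moreover have "\<zero>\<^bsub>End_ring R M\<^esub> \<in> carrier (End_ring R M)" "\<one>\<^bsub>End_ring R M\<^esub> \<in> carrier (End_ring R M)"
      using Tring ring.ring_simprules(2,6) by blast+
    ultimately show "carrier F2 \<subseteq> ?p ` carrier (End_ring R M)" unfolding F2_carrier
      by (metis empty_subsetI image_eqI insert_subset)
  qed
  then have "End_ring R M Quot (a_kernel (End_ring R M) F2 ?p) \<simeq> F2" by (rule P.FactRing_iso)
  then show ?thesis unfolding has_F2_factor_def using P.kernel_is_ideal by blast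
qed

end

theorem lemma1:
  fixes R :: "('a, 'c) ring_scheme"
    and M :: "('a, 'b, 'd) rmodule_scheme"
    and E :: "('a, 'e, 'f) rmodule_scheme"
    and i :: "'b \<Rightarrow> 'e"
  assumes "ring R"
    and "right_module R M"
    and "injective_hull R M E i"
    and "\<not> has_F2_factor (End_ring R M)"
  shows "\<not> has_F2_factor (End_ring R E)"
proof
  assume "has_F2_factor (End_ring R E)"
  then obtain I where I: "ideal I (End_ring R E)" "End_ring R E Quot I \<simeq> F2"
    unfolding has_F2_factor_def by blast
  then obtain j where j: "j \<in> ring_iso (End_ring R E Quot I) F2" unfolding is_ring_iso_def by blast
  have jh: "j \<in> ring_hom (End_ring R E Quot I) F2" using j unfolding ring_iso_def by blast
  have hh: "j \<circ> a_r_coset (End_ring R E) I \<in> ring_hom (End_ring R E) F2"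
    by (rule ring_hom_trans[OF ideal.rcos_ring_hom[OF I(1)] jh])
  interpret H: hsetup R M E i "j \<circ> a_r_coset (End_ring R E) I"
    by (rule hsetup.intro[OF assms(2) assms(3) hh])
  show False using H.T_factor assms(4) by blast
qed

end
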